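(* Let $d\ge1$, $K\ge2$, $n\ge1$ be integers. (i) If $(\mathbf W^\star,\mathbf H^\star)$ is an optimal solution of $\min_{\mathbf W\in\mathrm{OB}(d,K),\mathbf H\in\mathrm{OB}(d,nK)}\mathcal L_{\mathrm{HardMax}}(\mathbf W,\mathbf H)$, then $\mathbf W^\star\in\operatorname{argmax}_{\mathbf W\in\mathrm{OB}(d,K)}\rho_{\text{one-vs-rest}}(\mathbf W)$. (ii) Conversely, for every $\mathbf W^{\mathrm{SC}}\in\operatorname{argmax}_{\mathbf W\in\mathrm{OB}(d,K)}\rho_{\text{one-vs-rest}}(\mathbf W)$ there exists $\mathbf H^{\mathrm{SC}}\in\mathrm{OB}(d,nK)$ such that $(\mathbf W^{\mathrm{SC}},\mathbf H^{\mathrm{SC}})$ is an optimal solution of that minimization problem.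
   Context: $\mathrm{OB}(d,m)$ is the set of real $d\times m$ matrices with unit-norm columns. $\mathbf W\in\mathrm{OB}(d,K)$ has columns $\mathbf w_1,\dots,\mathbf w_K$; $\mathbf H\in\mathrm{OB}(d,nK)$ has columns $\mathbf h_{k,i}$, $k\in[K],i\in[n]$. $\mathcal L_{\mathrm{HardMax}}(\mathbf W,\mathbf H)=\max_{k\in[K]}\max_{i\in[n]}\max_{k'\ne k}\langle \mathbf w_{k'}-\mathbf w_k,\mathbf h_{k,i}\rangle$. For a point $\mathbf v$ and finite set $\mathcal W$, $\operatorname{dist}(\mathbf v,\mathcal W)=\inf\{\|\mathbf v-\mathbf w\|_2:\mathbf w\in\operatorname{conv}(\mathcal W)\}$, and $\rho_{\text{one-vs-rest}}(\mathbf W)=\min_{k}\operatorname{dist}(\mathbf w_k,\{\mathbf w_j\}_{j\ne k})$. *)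

theory Defs
  imports "HOL-Analysis.Analysis"
begin

text \<open>Vectors in R^d are elements of real^'d (d = CARD('d) \<ge> 1).
  A d x m matrix is represented by its columns, a function nat \<Rightarrow> real^'d,
  where only the columns with index < m matter.  The columns h_{k,i} of
  H \<in> OB(d,nK) are indexed as H k i with k < K, i < n.\<close>

definition OB :: "nat \<Rightarrow> (nat \<Rightarrow> real^'d) set" where
  "OB m = {W. \<forall>j<m. norm (W j) = 1}"

definition OB2 :: "nat \<Rightarrow> nat \<Rightarrow> (nat \<Rightarrow> nat \<Rightarrow> real^'d) set" where
  "OB2 K n = {H. \<forall>k<K. \<forall>i<n. norm (H k i) = 1}"

definition L_HardMax :: "nat \<Rightarrow> nat \<Rightarrow> (nat \<Rightarrow> real^'d) \<Rightarrow> (nat \<Rightarrow> nat \<Rightarrow> real^'d) \<Rightarrow> real" where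
  "L_HardMax K n W H =
     Max {inner (W k' - W k) (H k i) | k i k'. k < K \<and> i < n \<and> k' < K \<and> k' \<noteq> k}"

definition dist_hull :: "real^'d \<Rightarrow> (real^'d) set \<Rightarrow> real" where
  "dist_hull v S = (INF w\<in>convex hull S. norm (v - w))"

definition rho_ovr :: "nat \<Rightarrow> (nat \<Rightarrow> real^'d) \<Rightarrow> real" where
  "rho_ovr K W = Min ((\<lambda>k. dist_hull (W k) {W j | j. j < K \<and> j \<noteq> k}) ` {..<K})"

definition is_opt_HardMax :: "nat \<Rightarrow> nat \<Rightarrow> (nat \<Rightarrow> real^'d) \<Rightarrow> (nat \<Rightarrow> nat \<Rightarrow> real^'d) \<Rightarrow> bool" where
  "is_opt_HardMax K n W H \<longleftrightarrow> W \<in> OB K \<and> H \<in> OB2 K n \<and>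
     (\<forall>W'\<in>(OB K :: (nat \<Rightarrow> real^'d) set). \<forall>H'\<in>(OB2 K n :: (nat \<Rightarrow> nat \<Rightarrow> real^'d) set). L_HardMax K n W H \<le> L_HardMax K n W' H')"

definition is_argmax_rho :: "nat \<Rightarrow> (nat \<Rightarrow> real^'d) \<Rightarrow> bool" where
  "is_argmax_rho K W \<longleftrightarrow> W \<in> OB K \<and> (\<forall>W'\<in>(OB K :: (nat \<Rightarrow> real^'d) set). rho_ovr K W' \<le> rho_ovr K W)"

end

theory Submission
  imports Defs
begin

lemma dist_hull_nonneg:
  fixes v :: "real^'d"
  assumes "S \<noteq> {}"
  shows "0 \<le> dist_hull v S"
  unfolding dist_hull_def
  using assms by (intro cINF_greatest) (auto simp: hull_inc)

lemma lowerS: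
  fixes v h :: "real^'d"
  assumes "finite S" "S \<noteq> {}" "norm h = 1"
  shows "\<exists>s\<in>S. - dist_hull v S \<le> inner (s - v) h"
proof -
  define M where "M = Max ((\<lambda>s. inner (s - v) h) ` S)"
  obtain s where s: "s \<in> S" "M = inner (s - v) h"
  proof -
    have "M \<in> (\<lambda>s. inner (s - v) h) ` S" unfolding M_def using assms by (intro Max_in) auto
    then show ?thesis using that by auto
  qed
  have sub: "convex hull S \<subseteq> {x. inner (x - v) h \<le> M}"
  proof (rule hull_minimal)
    show "S \<subseteq> {x. inner (x - v) h \<le> M}" unfolding M_def using assms by auto
    have "{x. inner (x - v) h \<le> M} = {x. inner h x \<le> M + inner v h}"
      proof -
      have e: "\<And>x. inner (x - v) h = inner h x - inner v h" by (metis inner_commute inner_diff_left)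
      show ?thesis by (auto simp: e)
    qed
    then show "convex {x. inner (x - v) h \<le> M}" using convex_halfspace_le by metis
  qed
  have "- M \<le> dist_hull v S"
    unfolding dist_hull_def
  proof (rule cINF_greatest)
    show "convex hull S \<noteq> {}" using assms by simp
    fix c assume c: "c \<in> convex hull S"
    have "inner (c - v) h \<le> M" using sub c by auto
    moreover have "- norm (c - v) \<le> inner (c - v) h"
    proof -
      have "\<bar>inner (c - v) h\<bar> \<le> norm (c - v) * norm h" by (rule Cauchy_Schwarz_ineq2)
      then show ?thesis using assms(3) by auto
    qed
    moreover have "norm (c - v) = norm (v - c)" by (rule norm_minus_commute)
    ultimately show "- M \<le> norm (v - c)" by linarith
  qed
  then have "- dist_hull v S \<le> inner (s - v) h" using s by linarith
  then show ?thesis using s(1) by blast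
qed

lemma upperS:
  fixes v :: "real^'d"
  assumes "finite S" "S \<noteq> {}" "norm v = 1" "\<forall>s\<in>S. norm s = 1"
  shows "\<exists>h. norm h = 1 \<and> (\<forall>s\<in>S. inner (s - v) h \<le> - dist_hull v S)"
proof -
  define C where "C = convex hull S"
  have cC: "closed C" "convex C" "C \<noteq> {}" unfolding C_def
    using assms compact_convex_hull finite_imp_compact compact_imp_closed by auto
  define c where "c = closest_point C v"
  have cin: "c \<in> C" unfolding c_def using closest_point_in_set cC by blast
  have dh: "dist_hull v S = norm (v - c)"
    unfolding dist_hull_def C_def[symmetric]
  proof (rule antisym)
    show "(INF w\<in>C. norm (v - w)) \<le> norm (v - c)"
      by (rule cINF_lower) (use cin in \<open>auto intro: bdd_belowI[where m=0]\<close>)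
    show "norm (v - c) \<le> (INF w\<in>C. norm (v - w))"
      by (rule cINF_greatest) (use cC closest_point_le[of C _ v] in \<open>auto simp: c_def dist_norm\<close>)
  qed
  show ?thesis
  proof (cases "v = c")
    case True
    show ?thesis
    proof (intro exI conjI ballI)
      show "norm v = 1" by fact
      fix s assume s: "s \<in> S"
      have "inner s v \<le> norm s * norm v" by (rule norm_cauchy_schwarz)
      then have "inner (s - v) v \<le> 0" using assms s
        by (auto simp: inner_diff_left simp flip: power2_norm_eq_inner)
      then show "inner (s - v) v \<le> - dist_hull v S" using dh True by simp
    qed
  next
    case False
    define u where "u = norm (v - c)"
    have u: "u > 0" using False unfolding u_def by simp
    show ?thesis
    proof (intro exI conjI ballI)
      show "norm ((1/u) *\<^sub>R (v - c)) = 1" using u unfolding u_def by simp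
      fix s assume s: "s \<in> S"
      have "s \<in> C" unfolding C_def using s hull_inc by metis
      then have "inner (v - c) (s - c) \<le> 0" unfolding c_def using closest_point_dot cC by blast
      moreover have "inner (s - v) (v - c) = inner (v - c) (s - c) - u * u"
      proof -
        have "inner (s - v) (v - c) = inner ((s - c) - (v - c)) (v - c)" by simp
        also have "\<dots> = inner (v - c) (s - c) - inner (v - c) (v - c)"
          by (simp add: inner_diff_left inner_diff_right inner_commute)
        also have "inner (v - c) (v - c) = u * u" unfolding u_def
          by (simp add: dot_square_norm power2_eq_square)
        finally show ?thesis .
      qed
      ultimately have "inner (s - v) (v - c) \<le> - (u * u)" by linarith
      then have "inner (s - v) ((1/u) *\<^sub>R (v - c)) \<le> - (u * u) / u"
        using u by (simp add: pos_divide_le_eq)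
      then show "inner (s - v) ((1/u) *\<^sub>R (v - c)) \<le> - dist_hull v S"
        using dh u unfolding u_def by simp
    qed
  qed
qed

definition Sk :: "nat \<Rightarrow> (nat \<Rightarrow> real^'d) \<Rightarrow> nat \<Rightarrow> (real^'d) set" where
  "Sk K W k = {W j | j. j < K \<and> j \<noteq> k}"

lemma Sk_finite: "finite (Sk K W k)"
proof -
  have "Sk K W k \<subseteq> W ` {..<K}" unfolding Sk_def by auto
  then show ?thesis by (rule finite_subset) (rule finite_imageI, simp)
qed

lemma Sk_ne: "K \<ge> 2 \<Longrightarrow> Sk K W k \<noteq> {}"
proof -
  assume K: "K \<ge> 2"
  show ?thesis
  proof (cases "k = 0")
    case True
    then have "W 1 \<in> Sk K W k" using K unfolding Sk_def by auto
    then show ?thesis by auto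
  next
    case False
    then have "W 0 \<in> Sk K W k" using K unfolding Sk_def by auto
    then show ?thesis by auto
  qed
qed

lemma rho_le: "k < K \<Longrightarrow> rho_ovr K W \<le> dist_hull (W k) (Sk K W k)"
  unfolding rho_ovr_def Sk_def by (rule Min_le) auto

lemma rho_attain: "K \<ge> 2 \<Longrightarrow> \<exists>k<K. rho_ovr K W = dist_hull (W k) (Sk K W k)"
proof -
  assume K: "K \<ge> 2"
  have "rho_ovr K W \<in> (\<lambda>k. dist_hull (W k) {W j | j. j < K \<and> j \<noteq> k}) ` {..<K}"
    unfolding rho_ovr_def using K by (intro Min_in) (auto simp: lessThan_empty_iff)
  then show ?thesis unfolding Sk_def by auto
qed

lemma L_finite:
  fixes W :: "nat \<Rightarrow> real^'d" and H :: "nat \<Rightarrow> nat \<Rightarrow> real^'d" and K n :: nat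
  shows "finite {inner (W k' - W k) (H k i) | k i k'. k < K \<and> i < n \<and> k' < K \<and> k' \<noteq> k}"
proof -
  have "{inner (W k' - W k) (H k i) | k i k'. k < K \<and> i < n \<and> k' < K \<and> k' \<noteq> k}
     \<subseteq> (\<lambda>(k,i,k'). inner (W k' - W k) (H k i)) ` ({..<K} \<times> {..<n} \<times> {..<K})"
  proof (rule subsetI)
    fix x assume "x \<in> {inner (W k' - W k) (H k i) | k i k'. k < K \<and> i < n \<and> k' < K \<and> k' \<noteq> k}"
    then obtain k i k' where x: "x = inner (W k' - W k) (H k i)" "k < K" "i < n" "k' < K" by blast
    show "x \<in> (\<lambda>(k,i,k'). inner (W k' - W k) (H k i)) ` ({..<K} \<times> {..<n} \<times> {..<K})"
      by (rule image_eqI[where x="(k,i,k')"]) (simp_all add: x)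
  qed
  then show ?thesis by (rule finite_subset) (rule finite_imageI, simp)
qed

lemma lowerA:
  fixes W :: "nat \<Rightarrow> real^'d"
  assumes K: "K \<ge> 2" and n: "n \<ge> 1" and H: "H \<in> OB2 K n"
  shows "- rho_ovr K W \<le> L_HardMax K n W H"
proof -
  obtain k where k: "k < K" "rho_ovr K W = dist_hull (W k) (Sk K W k)" using rho_attain K by blast
  have "norm (H k 0) = 1" using H k n unfolding OB2_def by auto
  then obtain s where s: "s \<in> Sk K W k" "- dist_hull (W k) (Sk K W k) \<le> inner (s - W k) (H k 0)"
    using lowerS[OF Sk_finite Sk_ne[OF K]] by blast
  then obtain j where j: "j < K" "j \<noteq> k" "s = W j" unfolding Sk_def by auto
  have "inner (W j - W k) (H k 0) \<in> {inner (W k' - W k) (H k i) | k i k'. k < K \<and> i < n \<and> k' < K \<and> k' \<noteq> k}"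
    by (rule CollectI, rule exI[of _ k], rule exI[of _ 0], rule exI[of _ j]) (use j k n in auto)
  then have "inner (W j - W k) (H k 0) \<le> L_HardMax K n W H"
    unfolding L_HardMax_def using L_finite by (intro Max_ge) auto
  then show ?thesis using s j k by simp
qed

lemma upperE:
  fixes W :: "nat \<Rightarrow> real^'d"
  assumes K: "K \<ge> 2" and n: "n \<ge> 1" and W: "W \<in> OB K"
  shows "\<exists>H\<in>OB2 K n. L_HardMax K n W H \<le> - rho_ovr K W"
proof -
  define P where "P k h \<longleftrightarrow> norm h = 1 \<and> (\<forall>s\<in>Sk K W k. inner (s - W k) h \<le> - dist_hull (W k) (Sk K W k))" for k h
  define H where "H k i = (SOME h. P k h)" for k i :: nat
  have PH: "P k (H k i)" if "k < K" for k i
  proof -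
    have "\<forall>s\<in>Sk K W k. norm s = 1" using W unfolding OB_def Sk_def by auto
    moreover have "norm (W k) = 1" using W that unfolding OB_def by auto
    ultimately have "\<exists>h. P k h" unfolding P_def using upperS[OF Sk_finite Sk_ne[OF K]] by blast
    then show ?thesis unfolding H_def by (rule someI_ex)
  qed
  have HO: "H \<in> OB2 K n" unfolding OB2_def
  proof (intro CollectI allI impI)
    fix k i assume "k < K" "i < n"
    then show "norm (H k i) = 1" using PH[of k i] unfolding P_def by simp
  qed
  have HL: "L_HardMax K n W H \<le> - rho_ovr K W"
    unfolding L_HardMax_def
  proof (rule Max.boundedI)
    show "finite {inner (W k' - W k) (H k i) | k i k'. k < K \<and> i < n \<and> k' < K \<and> k' \<noteq> k}"
      by (rule L_finite)
    have "inner (W 1 - W 0) (H 0 0) \<in> {inner (W k' - W k) (H k i) | k i k'. k < K \<and> i < n \<and> k' < K \<and> k' \<noteq> k}"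
      by (rule CollectI, rule exI[of _ 0], rule exI[of _ 0], rule exI[of _ 1]) (use K n in auto)
    then show "{inner (W k' - W k) (H k i) | k i k'. k < K \<and> i < n \<and> k' < K \<and> k' \<noteq> k} \<noteq> {}" by blast
    fix a assume "a \<in> {inner (W k' - W k) (H k i) | k i k'. k < K \<and> i < n \<and> k' < K \<and> k' \<noteq> k}"
    then obtain k i k' where a: "a = inner (W k' - W k) (H k i)" "k < K" "i < n" "k' < K" "k' \<noteq> k" by blast
    have "W k' \<in> Sk K W k" unfolding Sk_def using a by auto
    moreover have "\<forall>s\<in>Sk K W k. inner (s - W k) (H k i) \<le> - dist_hull (W k) (Sk K W k)"
      using PH[OF a(2), of i] unfolding P_def by simp
    ultimately have "a \<le> - dist_hull (W k) (Sk K W k)" unfolding a(1) by blast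
    also have "\<dots> \<le> - rho_ovr K W" using rho_le[OF a(2)] by simp
    finally show "a \<le> - rho_ovr K W" .
  qed
  show ?thesis
  proof (rule bexI)
    show "L_HardMax K n W H \<le> - rho_ovr K W" by (rule HL)
    show "H \<in> OB2 K n" by (rule HO)
  qed
qed

theorem mainTheorem3:
  fixes K n :: nat
  assumes "K \<ge> 2" and "n \<ge> 1"
  shows "(\<forall>(W::nat \<Rightarrow> real^'d) H. is_opt_HardMax K n W H \<longrightarrow> is_argmax_rho K W)
       \<and> (\<forall>(W::nat \<Rightarrow> real^'d). is_argmax_rho K W \<longrightarrow> (\<exists>H\<in>OB2 K n. is_opt_HardMax K n W H))"
proof (intro conjI allI impI)
  fix W :: "nat \<Rightarrow> real^'d" and H
  assume opt: "is_opt_HardMax K n W H"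
  then have W: "W \<in> OB K" and H: "H \<in> OB2 K n" unfolding is_opt_HardMax_def by auto
  show "is_argmax_rho K W"
    unfolding is_argmax_rho_def
  proof (intro conjI ballI)
    show "W \<in> OB K" by fact
    fix W' :: "nat \<Rightarrow> real^'d" assume W': "W' \<in> OB K"
    obtain H' where H': "H' \<in> OB2 K n" "L_HardMax K n W' H' \<le> - rho_ovr K W'"
      using upperE[OF assms W'] by blast
    have "L_HardMax K n W H \<le> L_HardMax K n W' H'" using opt W' H' unfolding is_opt_HardMax_def by blast
    moreover have "- rho_ovr K W \<le> L_HardMax K n W H" using lowerA[OF assms H] .
    ultimately show "rho_ovr K W' \<le> rho_ovr K W" using H' by linarith
  qed
next
  fix W :: "nat \<Rightarrow> real^'d"
  assume am: "is_argmax_rho K W"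
  then have W: "W \<in> OB K" unfolding is_argmax_rho_def by auto
  obtain H where H: "H \<in> OB2 K n" "L_HardMax K n W H \<le> - rho_ovr K W"
    using upperE[OF assms W] by blast
  have "is_opt_HardMax K n W H"
    unfolding is_opt_HardMax_def
  proof (intro conjI ballI)
    show "W \<in> OB K" "H \<in> OB2 K n" using W H by auto
    fix W' :: "nat \<Rightarrow> real^'d" and H' :: "nat \<Rightarrow> nat \<Rightarrow> real^'d" assume W': "W' \<in> OB K" and H'': "H' \<in> OB2 K n"
    have "rho_ovr K W' \<le> rho_ovr K W" using am W' unfolding is_argmax_rho_def by blast
    moreover have "- rho_ovr K W' \<le> L_HardMax K n W' H'" using lowerA[OF assms H''] .
    ultimately show "L_HardMax K n W H \<le> L_HardMax K n W' H'" using H by linarith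
  qed
  then show "\<exists>H\<in>OB2 K n. is_opt_HardMax K n W H" using H by blast
qed

end
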